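(* Let $f:\mathbb{R}\to\mathbb{R}$, $f(x):=\exp(x^3-2x^2)-1$. Then $f$ has two distinct fixed points $p_1,p_2$ such that for each $i\in\{1,2\}$ there exist constants $\epsilon_i>0$, $c_i>0$ and $K_i\in[0,1)$ with the following property: for every initial point $x^{(0)}\in[p_i-\epsilon_i,p_i+\epsilon_i]$, the fixed-point iteration $x^{(t)}=f(x^{(t-1)})$ ($t\ge1$) converges to $p_i$, and for every $t\ge 2$, $$|x^{(t)}-p_i|\le K_i^t\cdot c_i\epsilon_i .$$
   Context: A fixed point of $f$ is a point $p$ with $f(p)=p$. *)

theory Defs
  imports Complex_Main
begin

definition fC :: "real \<Rightarrow> real" where
  "fC x = exp (x ^ 3 - 2 * x ^ 2) - 1"

end

theory Submission
  imports Defs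
begin

lemma exp_upper: "(x::real) \<le> 32 \<Longrightarrow> x < 32 \<Longrightarrow> exp x \<le> 1 / (1 - x/32)^32"
proof -
  assume a: "x \<le> 32" "x < 32"
  have "(1 - x / of_nat 32) ^ 32 \<le> exp (-x)" using exp_ge_one_minus_x_over_n_power_n[of x 32] a by simp
  moreover have "0 < (1 - x/32)^32" using a by simp
  ultimately have "exp x * (1 - x/32)^32 \<le> exp x * exp (-x)" by simp
  hence "exp x * (1 - x/32)^32 \<le> 1" by (simp add: exp_minus_inverse)
  thus ?thesis using \<open>0 < (1 - x/32)^32\<close> by (simp add: le_divide_eq mult.commute)
qed

lemma exp_lower: "-32 \<le> (x::real) \<Longrightarrow> (1 + x/32)^32 \<le> exp x"
  using exp_ge_one_plus_x_over_n_power_n[of 32 x] by simp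

lemma n1: "exp (2662375 / 1000000 :: real) < 20"
proof -
  have "exp (2662375 / 1000000 :: real) \<le> 1 / (1 - (2662375 / 1000000)/32)^32" by (rule exp_upper) auto
  also have "\<dots> < 20" by (simp add: power_divide)
  finally show ?thesis .
qed

lemma n2: "(769/100::real) < exp (217/100)"
proof -
  have "(769/100::real) < (1 + (217/100)/32)^32" by (simp add: power_divide)
  also have "\<dots> \<le> exp (217/100)" by (rule exp_lower) auto
  finally show ?thesis .
qed

lemma n3: "(76/10::real) < exp (21/10)"
proof -
  have "(76/10::real) < (1 + (21/10)/32)^32" by (simp add: power_divide)
  also have "\<dots> \<le> exp (21/10)" by (rule exp_lower) auto
  finally show ?thesis .
qed
lemma n4: "(8::real) < exp (217/100)"
proof -
  have "(8::real) < (1 + (217/100)/32)^32" by (simp add: power_divide)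
  also have "\<dots> \<le> exp (217/100)" by (rule exp_lower) auto
  finally show ?thesis .
qed


lemma fC_deriv: "DERIV fC x :> exp (x^3 - 2*x^2) * (3*x^2 - 4*x)"
  unfolding fC_def
  by (auto intro!: derivative_eq_intros simp: algebra_simps power2_eq_square power3_eq_cube)

lemma local_contr:
  fixes f f' :: "real \<Rightarrow> real"
  assumes fp: "f p = p" and r: "r > 0" and K: "0 \<le> K" "K < 1"
  and D: "\<And>x. DERIV f x :> f' x"
  and B: "\<And>x. x \<in> {p-r..p+r} \<Longrightarrow> \<bar>f' x\<bar> \<le> K"
  shows "\<forall>x0\<in>{p-r..p+r}. (\<lambda>t. (f^^t) x0) \<longlonglongrightarrow> p \<and> (\<forall>t. \<bar>(f^^t) x0 - p\<bar> \<le> K^t*r)"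
proof -
  have step: "\<bar>f x - p\<bar> \<le> K * \<bar>x - p\<bar>" if x: "x \<in> {p-r..p+r}" for x
  proof (cases x p rule: linorder_cases)
    case less
    obtain z where z: "x < z" "z < p" "f p - f x = (p - x) * f' z"
      using MVT2[OF less, of f f'] D by blast
    have "z \<in> {p-r..p+r}" using z x by auto
    hence "\<bar>f' z\<bar> \<le> K" by (rule B)
    hence "\<bar>(p - x) * f' z\<bar> \<le> \<bar>p - x\<bar> * K" by (simp add: abs_mult mult_left_mono)
    thus ?thesis using z fp by (simp add: abs_minus_commute mult.commute)
  next
    case equal thus ?thesis using fp by simp
  next
    case greater
    obtain z where z: "p < z" "z < x" "f x - f p = (x - p) * f' z"
      using MVT2[OF greater, of f f'] D by blast
    have "z \<in> {p-r..p+r}" using z x by auto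
    hence "\<bar>f' z\<bar> \<le> K" by (rule B)
    hence "\<bar>(x - p) * f' z\<bar> \<le> \<bar>x - p\<bar> * K" by (simp add: abs_mult mult_left_mono)
    thus ?thesis using z fp by (simp add: mult.commute)
  qed
  show ?thesis
  proof
    fix x0 assume x0: "x0 \<in> {p-r..p+r}"
    have main: "\<bar>(f^^t) x0 - p\<bar> \<le> K^t * \<bar>x0 - p\<bar>" for t
    proof (induction t)
      case 0 thus ?case by simp
    next
      case (Suc t)
      have "K^t \<le> 1" using K by (simp add: power_le_one)
      moreover have "\<bar>x0 - p\<bar> \<le> r" using x0 by auto
      ultimately have "K^t * \<bar>x0 - p\<bar> \<le> 1 * r"
        by (intro mult_mono) auto
      hence "(f^^t) x0 \<in> {p-r..p+r}" using Suc.IH by auto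
      hence "\<bar>f ((f^^t) x0) - p\<bar> \<le> K * \<bar>(f^^t) x0 - p\<bar>" by (rule step)
      also have "\<dots> \<le> K * (K^t * \<bar>x0 - p\<bar>)" using Suc.IH K by (simp add: mult_left_mono)
      finally show ?case by simp
    qed
    have bnd: "\<bar>(f^^t) x0 - p\<bar> \<le> K^t * r" for t
    proof -
      have "K^t * \<bar>x0 - p\<bar> \<le> K^t * r" using x0 K by (intro mult_left_mono) auto
      thus ?thesis using main[of t] by linarith
    qed
    have lim0: "(\<lambda>t. K^t * \<bar>x0 - p\<bar>) \<longlonglongrightarrow> 0"
      using LIMSEQ_power_zero[of K] K by (auto intro: tendsto_mult_left_zero)
    have "(\<lambda>t. (f^^t) x0 - p) \<longlonglongrightarrow> 0"
      by (rule tendsto_0_le[OF lim0, of _ 1]) (use main K in auto)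
    hence "(\<lambda>t. (f^^t) x0) \<longlonglongrightarrow> p" by (simp add: LIM_zero_iff)
    thus "(\<lambda>t. (f^^t) x0) \<longlonglongrightarrow> p \<and> (\<forall>t. \<bar>(f^^t) x0 - p\<bar> \<le> K^t*r)" using bnd by blast
  qed
qed

lemma bound0: "(x::real) \<in> {0-1/8..0+1/8} \<Longrightarrow> \<bar>exp (x^3 - 2*x^2) * (3*x^2 - 4*x)\<bar> \<le> 35/64"
proof -
  assume "x \<in> {0-1/8..0+1/8}"
  hence ax: "\<bar>x\<bar> \<le> 1/8" by auto
  have "x^2 \<le> (1/8)^2" using power_mono[OF ax, of 2] by simp
  hence x2: "x^2 \<le> 1/64" by (simp add: power_divide)
  have "x^3 - 2*x^2 = x^2 * (x - 2)" by (simp add: algebra_simps power2_eq_square power3_eq_cube)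
  also have "\<dots> \<le> 0" using ax by (intro mult_nonneg_nonpos) auto
  finally have e: "exp (x^3 - 2*x^2) \<le> 1" by simp
  have h: "\<bar>3*x^2 - 4*x\<bar> \<le> 35/64" using abs_triangle_ineq4[of "3*x^2" "4*x"] x2 ax by (simp add: abs_mult)
  have "\<bar>exp (x^3 - 2*x^2) * (3*x^2 - 4*x)\<bar> = exp (x^3 - 2*x^2) * \<bar>3*x^2 - 4*x\<bar>"
    by (simp add: abs_mult)
  also have "\<dots> \<le> 1 * (35/64)" using e h by (intro mult_mono) auto
  finally show ?thesis by simp
qed

lemma bound2:
  fixes x :: real
  assumes "x \<in> {-96/100..-86/100}"
  shows "\<bar>exp (x^3 - 2*x^2) * (3*x^2 - 4*x)\<bar> \<le> 9/10"
proof -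
  have a1: "86/100 \<le> -x" "-x \<le> 96/100" using assms by auto
  have "(86/100)^3 \<le> (-x)^3" using power_mono[OF a1(1), of 3] by simp
  hence c: "x^3 \<le> - 636056/1000000" by (simp add: power_divide)
  have "(86/100)^2 \<le> (-x)^2" using power_mono[OF a1(1), of 2] by simp
  hence s1: "7396/10000 \<le> x^2" by (simp add: power_divide)
  have "(-x)^2 \<le> (96/100)^2" using power_mono[OF a1(2), of 2] a1 by simp
  hence s2: "x^2 \<le> 9216/10000" by (simp add: power_divide)
  have "x^3 - 2*x^2 \<le> -21/10" using c s1 by simp
  hence "exp (x^3 - 2*x^2) \<le> exp (-21/10)" by simp
  also have "exp (-21/10::real) = 1 / exp (21/10)" by (simp add: exp_minus')
  also have "\<dots> \<le> 10/76" using n3 by (simp add: divide_simps)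
  finally have e: "exp (x^3 - 2*x^2) \<le> 10/76" .
  have h: "\<bar>3*x^2 - 4*x\<bar> \<le> 66048/10000" using abs_triangle_ineq4[of "3*x^2" "4*x"] s2 a1 by (simp add: abs_mult)
  have "\<bar>exp (x^3 - 2*x^2) * (3*x^2 - 4*x)\<bar> = exp (x^3 - 2*x^2) * \<bar>3*x^2 - 4*x\<bar>"
    by (simp add: abs_mult)
  also have "\<dots> \<le> (10/76) * (66048/10000)" using e h by (intro mult_mono) auto
  also have "\<dots> \<le> 9/10" by simp
  finally show ?thesis .
qed

lemma fixed2: "\<exists>p. -95/100 \<le> p \<and> p \<le> -87/100 \<and> fC p - p = 0"
proof (rule IVT2)
  have "exp ((-87/100::real)^3 - 2*(-87/100)^2) \<le> exp (-217/100)" by (simp add: power_divide)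
  also have "exp (-217/100::real) = 1 / exp (217/100)" by (simp add: exp_minus')
  also have "\<dots> \<le> 1/8" using n4 by (simp add: divide_simps)
  finally show "fC (-87/100) - (-87/100) \<le> 0" unfolding fC_def by simp
  have "exp ((-95/100::real)^3 - 2*(-95/100)^2) = exp (- (2662375 / 1000000))" by (simp add: power_divide)
  also have "\<dots> = 1 / exp (2662375 / 1000000)" by (simp add: exp_minus')
  also have "\<dots> \<ge> 1/20" using n1 by (simp add: divide_simps)
  finally show "0 \<le> fC (-95/100) - (-95/100)" unfolding fC_def by simp
  show "-95/100 \<le> (-87/100::real)" by simp
  show "\<forall>x. -95/100 \<le> x \<and> x \<le> -87/100 \<longrightarrow> isCont (\<lambda>x. fC x - x) x"
    unfolding fC_def by (auto intro!: continuous_intros)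
qed

theorem lemmaC1:
  shows "\<exists>p1 p2 :: real. p1 \<noteq> p2 \<and> fC p1 = p1 \<and> fC p2 = p2 \<and>
    (\<forall>p \<in> {p1, p2}. \<exists>eps>0. \<exists>c>0. \<exists>K::real. 0 \<le> K \<and> K < 1 \<and>
       (\<forall>x0 \<in> {p - eps .. p + eps}.
          (\<lambda>t. (fC ^^ t) x0) \<longlonglongrightarrow> p \<and>
          (\<forall>t::nat. t \<ge> 2 \<longrightarrow> \<bar>(fC ^^ t) x0 - p\<bar> \<le> K ^ t * c * eps)))"
proof -
  obtain p2 where p2: "-95/100 \<le> p2" "p2 \<le> -87/100" "fC p2 - p2 = 0" using fixed2 by blast
  have f0: "fC 0 = 0" by (simp add: fC_def)
  have c0: "\<forall>x0\<in>{0-1/8..0+1/8}. (\<lambda>t. (fC^^t) x0) \<longlonglongrightarrow> 0 \<and> (\<forall>t. \<bar>(fC^^t) x0 - 0\<bar> \<le> (35/64)^t*(1/8))"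
    by (rule local_contr[OF f0 _ _ _ fC_deriv bound0]) auto
  have c2: "\<forall>x0\<in>{p2-1/100..p2+1/100}. (\<lambda>t. (fC^^t) x0) \<longlonglongrightarrow> p2 \<and> (\<forall>t. \<bar>(fC^^t) x0 - p2\<bar> \<le> (9/10)^t*(1/100))"
    by (rule local_contr[OF _ _ _ _ fC_deriv bound2]) (use p2 in auto)
  have P0: "\<exists>eps>0. \<exists>c>0. \<exists>K::real. 0 \<le> K \<and> K < 1 \<and>
       (\<forall>x0 \<in> {0 - eps .. 0 + eps}. (\<lambda>t. (fC ^^ t) x0) \<longlonglongrightarrow> 0 \<and>
          (\<forall>t::nat. t \<ge> 2 \<longrightarrow> \<bar>(fC ^^ t) x0 - 0\<bar> \<le> K ^ t * c * eps))"
    by (rule exI[of _ "1/8"], simp, rule exI[of _ 1], simp, rule exI[of _ "35/64"]) (use c0 in auto)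
  have P2: "\<exists>eps>0. \<exists>c>0. \<exists>K::real. 0 \<le> K \<and> K < 1 \<and>
       (\<forall>x0 \<in> {p2 - eps .. p2 + eps}. (\<lambda>t. (fC ^^ t) x0) \<longlonglongrightarrow> p2 \<and>
          (\<forall>t::nat. t \<ge> 2 \<longrightarrow> \<bar>(fC ^^ t) x0 - p2\<bar> \<le> K ^ t * c * eps))"
    by (rule exI[of _ "1/100"], simp, rule exI[of _ 1], simp, rule exI[of _ "9/10"]) (use c2 in auto)
  show ?thesis
    by (rule exI[of _ 0], rule exI[of _ p2]) (use p2 f0 P0 P2 in auto)
qed

end
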